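(* Let $S$ be a finite semigroup. The congruence $\equiv_{\mathsf{RM}}$ equals the intersection of the congruences $\equiv_{\mathsf{RM},J}$ as $J$ runs over the $\mathsf{RM}$-irreducible regular $\mathscr J$-classes of $S$. Moreover, no $\mathsf{RM}$-irreducible regular $\mathscr J$-class $J$ can be omitted from this intersection without changing the resulting congruence.
   Context: $\mathscr J$-classes are ordered by $J'\le J$ iff $S^1J'S^1\subseteq S^1JS^1$; regular means containing an idempotent. For a regular $\mathscr J$-class $J$: $s\equiv_{\mathsf{RM},J}t$ iff for all $x\in J$, $xs\in J\iff xt\in J$, and if both lie in $J$ then $xs=xt$; $\equiv_{\mathsf{RM}}=\bigcap_J\equiv_{\mathsf{RM},J}$ over all regular $J$. A regular $J$ is $\mathsf{RM}$-irreducible if $\bigcap_{J'<J}\equiv_{\mathsf{RM},J'}\not\subseteq\equiv_{\mathsf{RM},J}$ (over regular $J'<J$; the empty intersection is the universal relation). *)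

theory Defs
  imports Main
begin

definition ideal1 :: "'a::semigroup_mult set \<Rightarrow> 'a set" where
  "ideal1 A = {z. \<exists>a\<in>A. z = a \<or> (\<exists>x. z = x * a) \<or> (\<exists>y. z = a * y) \<or> (\<exists>x y. z = x * a * y)}"

definition Jrel :: "('a::semigroup_mult \<times> 'a) set" where
  "Jrel = {(a, b). ideal1 {a} = ideal1 {b}}"

definition Jclasses :: "'a::semigroup_mult set set" where
  "Jclasses = UNIV // Jrel"

definition Jle :: "'a::semigroup_mult set \<Rightarrow> 'a set \<Rightarrow> bool" where
  "Jle J' J \<longleftrightarrow> ideal1 J' \<subseteq> ideal1 J"

definition Jless :: "'a::semigroup_mult set \<Rightarrow> 'a set \<Rightarrow> bool" where
  "Jless J' J \<longleftrightarrow> Jle J' J \<and> J' \<noteq> J"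

definition regularJ :: "'a::semigroup_mult set \<Rightarrow> bool" where
  "regularJ J \<longleftrightarrow> J \<in> Jclasses \<and> (\<exists>e\<in>J. e * e = e)"

definition RMJ :: "'a::semigroup_mult set \<Rightarrow> ('a \<times> 'a) set" where
  "RMJ J = {(s, t). \<forall>x\<in>J. (x * s \<in> J \<longleftrightarrow> x * t \<in> J) \<and> (x * s \<in> J \<and> x * t \<in> J \<longrightarrow> x * s = x * t)}"

definition RM :: "('a::semigroup_mult \<times> 'a) set" where
  "RM = (\<Inter>J\<in>{J. regularJ J}. RMJ J)"

definition RM_irreducible :: "'a::semigroup_mult set \<Rightarrow> bool" where
  "RM_irreducible J \<longleftrightarrow> regularJ J \<and>
     \<not> ((\<Inter>J'\<in>{J'. regularJ J' \<and> Jless J' J}. RMJ J') \<subseteq> RMJ J)"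

end

theory Submission
  imports Defs
begin

lemma I_refl: "a \<in> ideal1 {a}" by (simp add: ideal1_def)

lemma I_trans: "(a::'a::semigroup_mult) \<in> ideal1 {b} \<Longrightarrow> b \<in> ideal1 {c} \<Longrightarrow> a \<in> ideal1 {c}"
  by (auto simp: ideal1_def) (metis mult.assoc)+

lemma I_sub: "ideal1 {a::'a::semigroup_mult} \<subseteq> ideal1 {b} \<longleftrightarrow> a \<in> ideal1 {b}"
  using I_refl I_trans by blast

lemma I_multL: "(x::'a::semigroup_mult) * a \<in> ideal1 {a}" by (auto simp: ideal1_def)
lemma I_multR: "(a::'a::semigroup_mult) * y \<in> ideal1 {a}" by (auto simp: ideal1_def)

lemma ideal1_Un: "ideal1 A = (\<Union>a\<in>A. ideal1 {a})" by (auto simp: ideal1_def)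

lemma Jclass_eq: "J \<in> Jclasses \<Longrightarrow> \<exists>a. J = {b. ideal1 {b} = ideal1 {a}}"
  unfolding Jclasses_def quotient_def Jrel_def by auto

lemma Jclass_ideal: "J = {b. ideal1 {b} = ideal1 {a}} \<Longrightarrow> ideal1 J = ideal1 {a::'a::semigroup_mult}"
  apply (subst ideal1_Un) by auto

lemma Jless_psub:
  assumes "J \<in> Jclasses" "J' \<in> Jclasses" "Jless J' J"
  shows "ideal1 J' \<subset> ideal1 (J::'a::semigroup_mult set)"
proof -
  obtain a where a: "J = {b. ideal1 {b} = ideal1 {a}}" using Jclass_eq assms(1) by blast
  obtain a' where a': "J' = {b. ideal1 {b} = ideal1 {a'}}" using Jclass_eq assms(2) by blast
  have "ideal1 J' \<noteq> ideal1 J"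
  proof
    assume "ideal1 J' = ideal1 J"
    then have "ideal1 {a'} = ideal1 {a}" using Jclass_ideal a a' by metis
    then have "J = J'" using a a' by simp
    then show False using assms(3) by (simp add: Jless_def)
  qed
  then show ?thesis using assms(3) by (auto simp: Jless_def Jle_def)
qed

lemma part1:
  fixes J :: "'a::{semigroup_mult,finite} set"
  shows "regularJ J \<Longrightarrow> (\<Inter>J\<in>{J. RM_irreducible J}. RMJ J) \<subseteq> RMJ J"
proof (induction "card (ideal1 J)" arbitrary: J rule: less_induct)
  case less
  show ?case
  proof (cases "RM_irreducible J")
    case True then show ?thesis by blast
  next
    case False
    then have sub: "(\<Inter>J'\<in>{J'. regularJ J' \<and> Jless J' J}. RMJ J') \<subseteq> RMJ J"
      using less.prems by (simp add: RM_irreducible_def)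
    have "(\<Inter>J\<in>{J. RM_irreducible J}. RMJ J) \<subseteq> RMJ J'" if "regularJ J'" "Jless J' J" for J'
    proof -
      have "ideal1 J' \<subset> ideal1 J" using Jless_psub that less.prems by (auto simp: regularJ_def)
      then have "card (ideal1 J') < card (ideal1 J)" by (simp add: psubset_card_mono)
      then show ?thesis using less.hyps that(1) by blast
    qed
    then show ?thesis using sub by blast
  qed
qed

lemma factor:
  assumes "x \<in> ideal1 {f}" "f * f = (f::'a::semigroup_mult)"
  shows "\<exists>y m. x = y * m \<and> y \<in> ideal1 {f} \<and> x \<in> ideal1 {y} \<and> m \<in> ideal1 {f}"
proof -
  from assms(1) consider "x = f" | u where "x = u * f" | v where "x = f * v" | u v where "x = u * f * v"
    by (auto simp: ideal1_def)
  then show ?thesis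
  proof cases
    case 1 then show ?thesis using assms(2) I_refl by metis
  next
    case (2 u) then show ?thesis using assms(2) I_refl I_multL
      by (metis mult.assoc)
  next
    case (3 v) then show ?thesis using assms(2) I_refl I_multR I_multL
      by (metis mult.assoc)
  next
    case (4 u v)
    then have "x = (u * f) * (f * v)" using assms(2) by (metis mult.assoc)
    moreover have "x \<in> ideal1 {u * f}" using 4 by (metis mult.assoc I_multR)
    ultimately show ?thesis using I_multL I_multR by blast
  qed
qed

lemma part2:
  fixes J :: "'a::{semigroup_mult,finite} set"
  assumes irr: "RM_irreducible J"
  shows "(\<Inter>J'\<in>{J'. RM_irreducible J' \<and> J' \<noteq> J}. RMJ J') \<noteq> RM"
proof -
  have reg: "regularJ J" using irr by (simp add: RM_irreducible_def)
  obtain a where a: "J = {b. ideal1 {b} = ideal1 {a}}" using Jclass_eq[of J] reg by (auto simp: regularJ_def)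
  obtain f where f: "f \<in> J" "f * f = f" using reg by (auto simp: regularJ_def)
  obtain s t where st: "(s,t) \<in> (\<Inter>J'\<in>{J'. regularJ J' \<and> Jless J' J}. RMJ J')" "(s,t) \<notin> RMJ J"
    using irr by (auto simp: RM_irreducible_def)
  then obtain x where x: "x \<in> J" "\<not> ((x * s \<in> J \<longleftrightarrow> x * t \<in> J) \<and> (x * s \<in> J \<and> x * t \<in> J \<longrightarrow> x * s = x * t))"
    by (auto simp: RMJ_def)
  have "x \<in> ideal1 {f}" using x(1) f(1) a I_refl by auto
  then obtain y m where ym: "x = y * m" "y \<in> ideal1 {f}" "x \<in> ideal1 {y}" "m \<in> ideal1 {f}"
    using factor f(2) by blast
  have Ifa: "ideal1 {f} = ideal1 {a}" using f a by auto
  have Ixa: "ideal1 {x} = ideal1 {a}" using x a by auto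
  have yJ: "y \<in> J" using ym(2,3) Ifa Ixa a I_sub by blast
  have ma: "ideal1 {m} \<subseteq> ideal1 {a}" using ym(4) Ifa I_sub by blast
  have notin: "(m * s, m * t) \<notin> RMJ J"
    using yJ x ym(1) unfolding RMJ_def by (auto simp: mult.assoc)
  have inall: "(m * s, m * t) \<in> RMJ J'" if J': "RM_irreducible J'" "J' \<noteq> J" for J'
  proof -
    have regJ': "regularJ J'" using J' by (simp add: RM_irreducible_def)
    obtain a' where a': "J' = {b. ideal1 {b} = ideal1 {a'}}" using Jclass_eq[of J'] regJ' by (auto simp: regularJ_def)
    have key: "z * m \<in> J' \<and> Jless J' J" if z: "z \<in> J'" and w: "z * (m * r) \<in> J'" for z r
    proof -
      have e1: "ideal1 {z * m * r} = ideal1 {a'}" "ideal1 {z} = ideal1 {a'}" using z w a' by (auto simp: mult.assoc)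
      have s1: "ideal1 {z * m * r} \<subseteq> ideal1 {z * m}" using I_multR I_sub by blast
      have s2: "ideal1 {z * m} \<subseteq> ideal1 {z}" using I_multR I_sub by blast
      have s3: "ideal1 {z * m} \<subseteq> ideal1 {m}" using I_multL I_sub by blast
      have zm: "ideal1 {z * m} = ideal1 {a'}" using e1 s1 s2 by blast
      have "ideal1 {a'} \<subseteq> ideal1 {a}" using zm s3 ma by blast
      then have "Jle J' J" using Jclass_ideal a a' by (metis Jle_def)
      then show ?thesis using zm a' J'(2) by (auto simp: Jless_def)
    qed
    show ?thesis unfolding RMJ_def
    proof (clarsimp)
      fix z assume z: "z \<in> J'"
      show "(z * (m * s) \<in> J' \<longleftrightarrow> z * (m * t) \<in> J') \<and>
            (z * (m * s) \<in> J' \<and> z * (m * t) \<in> J' \<longrightarrow> z * (m * s) = z * (m * t))"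
      proof (cases "z * m \<in> J' \<and> Jless J' J")
        case True
        then have "(s,t) \<in> RMJ J'" using st(1) regJ' by blast
        then have "\<forall>x\<in>J'. (x * s \<in> J' \<longleftrightarrow> x * t \<in> J') \<and> (x * s \<in> J' \<and> x * t \<in> J' \<longrightarrow> x * s = x * t)"
          unfolding RMJ_def by blast
        then have "(z * m * s \<in> J' \<longleftrightarrow> z * m * t \<in> J') \<and> (z * m * s \<in> J' \<and> z * m * t \<in> J' \<longrightarrow> z * m * s = z * m * t)"
          using True by blast
        then show ?thesis by (simp add: mult.assoc)
      next
        case False
        then show ?thesis using key[OF z] by blast
      qed
    qed
  qed
  have "RM \<subseteq> RMJ J" using reg unfolding RM_def by blast
  then show ?thesis using notin inall by blast
qed

theorem proposition2p3:
  fixes dummy :: "'a::{semigroup_mult, finite}"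
  shows "(RM :: ('a \<times> 'a) set) = (\<Inter>J\<in>{J. RM_irreducible J}. RMJ J)
    \<and> (\<forall>J :: 'a set. RM_irreducible J \<longrightarrow>
          (\<Inter>J'\<in>{J'. RM_irreducible J' \<and> J' \<noteq> J}. RMJ J') \<noteq> (RM :: ('a \<times> 'a) set))"
proof
  have "RM \<subseteq> (\<Inter>J\<in>{J. RM_irreducible J}. RMJ (J::'a set))"
    unfolding RM_def RM_irreducible_def by blast
  moreover have "(\<Inter>J\<in>{J. RM_irreducible J}. RMJ (J::'a set)) \<subseteq> RM"
    unfolding RM_def using part1 by blast
  ultimately show "(RM :: ('a \<times> 'a) set) = (\<Inter>J\<in>{J. RM_irreducible J}. RMJ J)" by blast
  show "\<forall>J :: 'a set. RM_irreducible J \<longrightarrow>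
          (\<Inter>J'\<in>{J'. RM_irreducible J' \<and> J' \<noteq> J}. RMJ J') \<noteq> (RM :: ('a \<times> 'a) set)"
    using part2 by blast
qed

end
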